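(* Assume $\rho_\alpha^{\mathrm{dir}}<1$, let $\theta^\star$ be the unique projected Bellman fixed point, and let $x_k:=\theta_k-\theta^\star$. Then for each $k\ge0$ there exists an $\mathcal F_k$-measurable stochastic policy $\mu_k$ such that \[ x_{k+1}=A_{\mu_k}x_k+\alpha b_k+\alpha\xi_{k+1}\quad\text{for all }k\ge0, \] where $\mathbb E[\xi_{k+1}\mid\mathcal F_k]=0$. Moreover, \[ b_k=\Phi^\top(e_{X_k}e_{X_k}^\top-D)\Big(R+\gamma PV_{\theta^\star}-\Phi\theta^\star+(\gamma P\Pi^{\mu_k}-I)\Phi x_k\Big). \]
   Context: Consider a finite discounted MDP with state space $\mathcal S=\{1,\dots,|\mathcal S|\}$, action space $\mathcal A=\{1,\dots,|\mathcal A|\}$, transition probabilities $P(s'\mid s,a)$, real rewards $r(s,a,s')$, expected reward $R(s,a)=\sum_{s'}P(s'\mid s,a)r(s,a,s')$, and discount factor $\gamma\in(0,1)$. State-action vectors are ordered as $(1,1),(2,1),\dots,(|\mathcal S|,1),(1,2),\dots$. The matrix $P$ has rows $P(\cdot\mid s,a)$, and $R$ has entries $R(s,a)$. For a state-action pair $i$, $e_i\in\mathbb R^{|\mathcal S||\mathcal A|}$ is the corresponding coordinate vector. A stochastic policy is a map $\mu:\mathcal S\to\Delta_{|\mathcal A|}$. The matrix $\Pi^\mu\in\mathbb R^{|\mathcal S|\times|\mathcal S||\mathcal A|}$ has entry $\mu(a\mid s)$ at row $s$, column $(s,a)$, and zeros elsewhere. The set $\Theta$ is the set of deterministic stationary policies.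 The feature matrix $\Phi$ has full column rank and rows $\phi(s,a)^\top$. Define $V_\theta(s):=\max_a\phi(s,a)^\top\theta$. The step size is $\alpha\in(0,1)$. Markovian observations: fix a behavior policy $b(a\mid s)$. The trajectory evolves as $s_{k+1}\sim P(\cdot\mid s_k,a_k)$, $r_{k+1}=r(s_k,a_k,s_{k+1})$, $a_{k+1}\sim b(\cdot\mid s_{k+1})$. The chain $X_k=(s_k,a_k)$ has a stationary distribution $d$ with $d>0$ everywhere, and $D=\mathrm{diag}(d)$. The filtration is $\mathcal F_k=\sigma(\theta_0,X_0,r_1,X_1,\dots,r_k,X_k)$, and $\theta_0$ is deterministic. The update is $\theta_{k+1}=\theta_k+\alpha\phi(X_k)\big(r_{k+1}+\gamma\max_u\phi(s_{k+1},u)^\top\theta_k-\phi(X_k)^\top\theta_k\big)$. Define $\delta(\theta):=R+\gamma PV_\theta-\Phi\theta$, \[ \xi_{k+1}:=\phi(X_k)\big(r_{k+1}+\gamma\max_u\phi(s_{k+1},u)^\top\theta_k-\phi(X_k)^\top\theta_k-e_{X_k}^\top\delta(\theta_k)\big), \] and $b_k:=\Phi^\top(e_{X_k}e_{X_k}^\top-D)\delta(\theta_k)$. Define $g(\theta):=\Phi^\top D\delta(\theta)$; a projected Bellman fixed point is a $\theta^\star$ with $g(\theta^\star)=0$. Define $A_\mu:=I-\alpha\Phi^\top D\Phi+\alpha\gamma\Phi^\top DP\Pi^\mu\Phi$, and let $\rho_\alpha^{\mathrm{dir}}$ be the joint spectral radius $\lim_k\max_{\pi_i\in\Theta}\|A_{\pi_k}\cdots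 A_{\pi_1}\|^{1/k}$. When $\rho_\alpha^{\mathrm{dir}}<1$, a unique projected Bellman fixed point exists. *)

theory Defs
  imports "HOL-Probability.Probability"
begin

(* Phi :: real^'d^('s\<times>'u)  has rows phi(s,a)^T.
   P   :: real^'s^('s\<times>'u)  has rows P(.|s,a). *)

definition stoch_policy :: "('s::finite \<Rightarrow> 'u::finite \<Rightarrow> real) \<Rightarrow> bool" where
  "stoch_policy mu \<longleftrightarrow> (\<forall>s a. 0 \<le> mu s a) \<and> (\<forall>s. (\<Sum>a\<in>UNIV. mu s a) = 1)"

definition det_policy :: "('s::finite \<Rightarrow> 'u::finite) \<Rightarrow> 's \<Rightarrow> 'u \<Rightarrow> real" where
  "det_policy pol s a = (if pol s = a then 1 else 0)"

definition Rvec :: "real^'s^('s::finite \<times> 'u::finite) \<Rightarrow> ('s \<Rightarrow> 'u \<Rightarrow> 's \<Rightarrow> real) \<Rightarrow> real^('s \<times> 'u)" where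
  "Rvec P r = (\<chi> i. \<Sum>s'\<in>UNIV. P $ i $ s' * r (fst i) (snd i) s')"

definition Vth :: "real^'d^('s::finite \<times> 'u::finite) \<Rightarrow> real^'d \<Rightarrow> real^'s" where
  "Vth Phi th = (\<chi> s. Max (range (\<lambda>a. (Phi $ (s,a)) \<bullet> th)))"

definition PiM :: "('s::finite \<Rightarrow> 'u::finite \<Rightarrow> real) \<Rightarrow> real^('s \<times> 'u)^'s" where
  "PiM mu = (\<chi> s. \<chi> j. if fst j = s then mu s (snd j) else 0)"

definition diagM :: "real^'n::finite \<Rightarrow> real^'n^'n" where
  "diagM d = (\<chi> i j. if i = j then d $ i else 0)"

definition outerE :: "'n::finite \<Rightarrow> real^'n^'n" where
  "outerE x = (\<chi> i j. if i = x \<and> j = x then 1 else 0)"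

definition deltaB :: "real^('s::finite \<times> 'u::finite) \<Rightarrow> real^'s^('s \<times> 'u) \<Rightarrow> real
     \<Rightarrow> real^'d^('s \<times> 'u) \<Rightarrow> real^'d \<Rightarrow> real^('s \<times> 'u)" where
  "deltaB R P \<gamma> Phi th = R + \<gamma> *\<^sub>R (P *v Vth Phi th) - Phi *v th"

definition gB :: "real^('s::finite \<times> 'u::finite) \<Rightarrow> real^'s^('s \<times> 'u) \<Rightarrow> real
     \<Rightarrow> real^'d^('s \<times> 'u) \<Rightarrow> real^('s \<times> 'u) \<Rightarrow> real^'d \<Rightarrow> real^'d" where
  "gB R P \<gamma> Phi d th = transpose Phi *v (diagM d *v deltaB R P \<gamma> Phi th)"

definition Amu :: "real \<Rightarrow> real \<Rightarrow> real^'d^('s::finite \<times> 'u::finite) \<Rightarrow> real^('s \<times> 'u)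
     \<Rightarrow> real^'s^('s \<times> 'u) \<Rightarrow> ('s \<Rightarrow> 'u \<Rightarrow> real) \<Rightarrow> real^'d^'d" where
  "Amu \<alpha> \<gamma> Phi d P mu = mat 1 - \<alpha> *\<^sub>R (transpose Phi ** diagM d ** Phi)
      + (\<alpha> * \<gamma>) *\<^sub>R (transpose Phi ** diagM d ** P ** PiM mu ** Phi)"

(* joint spectral radius over deterministic stationary policies:
   lim_k max_{pi_1..pi_k} ||A_{pi_k} ... A_{pi_1}||^(1/k), k \<ge> 1
   (any matrix norm gives the same value; we use the norm of real^'d^'d) *)
definition rho_dir :: "real \<Rightarrow> real \<Rightarrow> real^'d::finite^('s::finite \<times> 'u::finite) \<Rightarrow> real^('s \<times> 'u)
     \<Rightarrow> real^'s^('s \<times> 'u) \<Rightarrow> real" where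
  "rho_dir \<alpha> \<gamma> Phi d P =
     lim (\<lambda>k. Max ((\<lambda>ps. norm (foldr (\<lambda>pol M. Amu \<alpha> \<gamma> Phi d P (det_policy pol) ** M) ps (mat 1)))
                     ` {ps :: ('s \<Rightarrow> 'u) list. length ps = Suc k}) powr (1 / real (Suc k)))"

(* iterates theta_k(omega) of Q-learning with linear function approximation;
   X k = (s_k,a_k), rw (Suc k) = r_{k+1} *)
fun theta_it :: "real \<Rightarrow> real \<Rightarrow> real^'d^('s::finite \<times> 'u::finite) \<Rightarrow> real^'d
     \<Rightarrow> (nat \<Rightarrow> 'w \<Rightarrow> 's \<times> 'u) \<Rightarrow> (nat \<Rightarrow> 'w \<Rightarrow> real) \<Rightarrow> nat \<Rightarrow> 'w \<Rightarrow> real^'d" where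
  "theta_it \<alpha> \<gamma> Phi th0 X rw 0 \<omega> = th0"
| "theta_it \<alpha> \<gamma> Phi th0 X rw (Suc k) \<omega> =
     (let th = theta_it \<alpha> \<gamma> Phi th0 X rw k \<omega>; x = X k \<omega>; s' = fst (X (Suc k) \<omega>)
      in th + (\<alpha> * (rw (Suc k) \<omega> + \<gamma> * Max (range (\<lambda>u. (Phi $ (s',u)) \<bullet> th)) - (Phi $ x) \<bullet> th))
              *\<^sub>R (Phi $ x))"

definition xi_noise :: "real^('s::finite \<times> 'u::finite) \<Rightarrow> real^'s^('s \<times> 'u) \<Rightarrow> real \<Rightarrow> real
     \<Rightarrow> real^'d^('s \<times> 'u) \<Rightarrow> real^'d \<Rightarrow> (nat \<Rightarrow> 'w \<Rightarrow> 's \<times> 'u) \<Rightarrow> (nat \<Rightarrow> 'w \<Rightarrow> real)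
     \<Rightarrow> nat \<Rightarrow> 'w \<Rightarrow> real^'d" where
  "xi_noise R P \<alpha> \<gamma> Phi th0 X rw k \<omega> =
     (let th = theta_it \<alpha> \<gamma> Phi th0 X rw k \<omega>; x = X k \<omega>; s' = fst (X (Suc k) \<omega>)
      in (rw (Suc k) \<omega> + \<gamma> * Max (range (\<lambda>u. (Phi $ (s',u)) \<bullet> th)) - (Phi $ x) \<bullet> th
           - deltaB R P \<gamma> Phi th $ x) *\<^sub>R (Phi $ x))"
(* note: xi_noise ... k is xi_{k+1} *)

definition b_bias :: "real^('s::finite \<times> 'u::finite) \<Rightarrow> real^'s^('s \<times> 'u) \<Rightarrow> real \<Rightarrow> real
     \<Rightarrow> real^'d^('s \<times> 'u) \<Rightarrow> real^('s \<times> 'u) \<Rightarrow> real^'d \<Rightarrow> (nat \<Rightarrow> 'w \<Rightarrow> 's \<times> 'u)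
     \<Rightarrow> (nat \<Rightarrow> 'w \<Rightarrow> real) \<Rightarrow> nat \<Rightarrow> 'w \<Rightarrow> real^'d" where
  "b_bias R P \<alpha> \<gamma> Phi d th0 X rw k \<omega> =
     transpose Phi *v ((outerE (X k \<omega>) - diagM d) *v deltaB R P \<gamma> Phi (theta_it \<alpha> \<gamma> Phi th0 X rw k \<omega>))"

(* F_k = sigma(theta_0, X_0, r_1, X_1, ..., r_k, X_k); theta_0 is deterministic *)
definition filt :: "'w measure \<Rightarrow> (nat \<Rightarrow> 'w \<Rightarrow> 's \<times> 'u) \<Rightarrow> (nat \<Rightarrow> 'w \<Rightarrow> real) \<Rightarrow> nat \<Rightarrow> 'w measure" where
  "filt M X rw k = sigma (space M)
     ({X i -` A \<inter> space M | i A. i \<le> k} \<union>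
      {rw i -` B \<inter> space M | i B. 1 \<le> i \<and> i \<le> k \<and> B \<in> sets borel})"

definition filt_next :: "'w measure \<Rightarrow> (nat \<Rightarrow> 'w \<Rightarrow> 's \<times> 'u) \<Rightarrow> (nat \<Rightarrow> 'w \<Rightarrow> real) \<Rightarrow> nat \<Rightarrow> 'w measure" where
  "filt_next M X rw k = sigma (space M)
     ({X i -` A \<inter> space M | i A. i \<le> k} \<union>
      {rw i -` B \<inter> space M | i B. 1 \<le> i \<and> i \<le> Suc k \<and> B \<in> sets borel} \<union>
      {(\<lambda>\<omega>. fst (X (Suc k) \<omega>)) -` S \<inter> space M | S. True})"

end

theory Submission
  imports Defs
begin



definition Vm :: "real^'d::finite^('s::finite\<times>'u::finite) \<Rightarrow> real^'d \<Rightarrow> 's \<Rightarrow> real" where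
  "Vm Phi th s = Max (range (\<lambda>a. Phi $ (s,a) \<bullet> th))"

definition Ind :: "real^'d::finite^('s::finite\<times>'u::finite) \<Rightarrow> real^'d \<Rightarrow> 's \<Rightarrow> 'u \<Rightarrow> real" where
  "Ind Phi th s a = (if Phi $ (s,a) \<bullet> th = Vm Phi th s then 1 else 0)"

definition mu1 :: "real^'d::finite^('s::finite\<times>'u::finite) \<Rightarrow> real^'d \<Rightarrow> 's \<Rightarrow> 'u \<Rightarrow> real" where
  "mu1 Phi th s a = Ind Phi th s a / (\<Sum>b\<in>UNIV. Ind Phi th s b)"

definition Gpol :: "real^'d::finite^('s::finite\<times>'u::finite) \<Rightarrow> real^'d \<Rightarrow> real^'d \<Rightarrow> 's \<Rightarrow> 'u \<Rightarrow> real" where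
  "Gpol Phi ts th s a =
    (let u1 = (\<Sum>b\<in>UNIV. mu1 Phi th s b * (Phi $ (s,b) \<bullet> (th - ts)));
         u2 = (\<Sum>b\<in>UNIV. mu1 Phi ts s b * (Phi $ (s,b) \<bullet> (th - ts)));
         v = Vm Phi th s - Vm Phi ts s;
         l = (if u1 = u2 then 1 else (v - u2) / (u1 - u2))
     in l * mu1 Phi th s a + (1 - l) * mu1 Phi ts s a)"

lemma Vm_ge: "Phi $ (s,a) \<bullet> th \<le> Vm Phi th s"
  unfolding Vm_def by (rule Max_ge) auto

lemma Vm_ex: "\<exists>a. Phi $ (s,a) \<bullet> th = Vm Phi th s"
proof -
  have "Vm Phi th s \<in> range (\<lambda>a. Phi $ (s,a) \<bullet> th)"
    unfolding Vm_def by (rule Max_in) auto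
  then show ?thesis by auto
qed

lemma Ind_sum_ge: "1 \<le> (\<Sum>b\<in>UNIV. Ind Phi th s b)"
proof -
  obtain a where a: "Phi $ (s,a) \<bullet> th = Vm Phi th s" using Vm_ex by blast
  have "Ind Phi th s a \<le> (\<Sum>b\<in>UNIV. Ind Phi th s b)"
    by (rule member_le_sum) (auto simp: Ind_def)
  with a show ?thesis by (simp add: Ind_def)
qed

lemma mu1_nonneg: "0 \<le> mu1 Phi th s a"
  using Ind_sum_ge[of Phi th s] unfolding mu1_def by (auto simp: Ind_def)

lemma mu1_sum: "(\<Sum>a\<in>UNIV. mu1 Phi th s a) = 1"
  using Ind_sum_ge[of Phi th s] unfolding mu1_def by (simp add: sum_divide_distrib[symmetric])

lemma mu1_V: "(\<Sum>a\<in>UNIV. mu1 Phi th s a * (Phi $ (s,a) \<bullet> th)) = Vm Phi th s"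
proof -
  have "(\<Sum>a\<in>UNIV. mu1 Phi th s a * (Phi $ (s,a) \<bullet> th)) = (\<Sum>a\<in>UNIV. mu1 Phi th s a * Vm Phi th s)"
    by (rule sum.cong) (auto simp: mu1_def Ind_def)
  also have "\<dots> = Vm Phi th s" by (simp add: sum_distrib_right[symmetric] mu1_sum)
  finally show ?thesis .
qed

lemma mu1_le: "(\<Sum>a\<in>UNIV. mu1 Phi th s a * (Phi $ (s,a) \<bullet> th')) \<le> Vm Phi th' s"
proof -
  have "(\<Sum>a\<in>UNIV. mu1 Phi th s a * (Phi $ (s,a) \<bullet> th')) \<le> (\<Sum>a\<in>UNIV. mu1 Phi th s a * Vm Phi th' s)"
    by (rule sum_mono) (simp add: mult_left_mono mu1_nonneg Vm_ge)
  also have "\<dots> = Vm Phi th' s" by (simp add: sum_distrib_right[symmetric] mu1_sum)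
  finally show ?thesis .
qed

lemma Gpol_props:
  shows "stoch_policy (Gpol Phi ts th)"
    and "(\<Sum>a\<in>UNIV. Gpol Phi ts th s a * (Phi $ (s,a) \<bullet> (th - ts))) = Vm Phi th s - Vm Phi ts s"
proof -
  define u1 where "u1 s = (\<Sum>b\<in>UNIV. mu1 Phi th s b * (Phi $ (s,b) \<bullet> (th - ts)))" for s
  define u2 where "u2 s = (\<Sum>b\<in>UNIV. mu1 Phi ts s b * (Phi $ (s,b) \<bullet> (th - ts)))" for s
  define v where "v s = Vm Phi th s - Vm Phi ts s" for s
  define l where "l s = (if u1 s = u2 s then 1 else (v s - u2 s) / (u1 s - u2 s))" for s
  have G: "Gpol Phi ts th s a = l s * mu1 Phi th s a + (1 - l s) * mu1 Phi ts s a" for s a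
    unfolding Gpol_def u1_def u2_def v_def l_def Let_def by simp
  have u1: "u1 s = Vm Phi th s - (\<Sum>b\<in>UNIV. mu1 Phi th s b * (Phi $ (s,b) \<bullet> ts))" for s
    unfolding u1_def by (simp add: inner_diff_right right_diff_distrib sum_subtractf mu1_V)
  have u2: "u2 s = (\<Sum>b\<in>UNIV. mu1 Phi ts s b * (Phi $ (s,b) \<bullet> th)) - Vm Phi ts s" for s
    unfolding u2_def by (simp add: inner_diff_right right_diff_distrib sum_subtractf mu1_V)
  have le1: "v s \<le> u1 s" for s using mu1_le[of Phi th s ts] unfolding u1 v_def by simp
  have le2: "u2 s \<le> v s" for s using mu1_le[of Phi ts s th] unfolding u2 v_def by simp
  have l01: "0 \<le> l s \<and> l s \<le> 1" for s
    using le1[of s] le2[of s] unfolding l_def by (auto simp: field_simps)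
  show "stoch_policy (Gpol Phi ts th)"
    unfolding stoch_policy_def
  proof safe
    fix s a show "0 \<le> Gpol Phi ts th s a"
      unfolding G using l01[of s] mu1_nonneg[of Phi th s a] mu1_nonneg[of Phi ts s a] by simp
  next
    fix s show "(\<Sum>a\<in>UNIV. Gpol Phi ts th s a) = 1"
      unfolding G by (simp add: sum.distrib sum_distrib_left[symmetric] mu1_sum)
  qed
  have "(\<Sum>a\<in>UNIV. Gpol Phi ts th s a * (Phi $ (s,a) \<bullet> (th - ts))) = l s * u1 s + (1 - l s) * u2 s"
    unfolding G u1_def u2_def by (simp add: sum.distrib sum_distrib_left distrib_right mult.assoc)
  also have "\<dots> = v s"
    using le1[of s] le2[of s] unfolding l_def by (auto simp: field_simps)
  finally show "(\<Sum>a\<in>UNIV. Gpol Phi ts th s a * (Phi $ (s,a) \<bullet> (th - ts))) = Vm Phi th s - Vm Phi ts s"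
    unfolding v_def .
qed


lemma sum_UNIV_pair: "(\<Sum>j\<in>(UNIV::('s::finite\<times>'u::finite) set). f j) = (\<Sum>s\<in>UNIV. \<Sum>a\<in>UNIV. f (s,a))"
  by (subst UNIV_Times_UNIV[symmetric]) (rule sum.cartesian_product')

lemma mv_comp: "(A *v y) $ s = (\<Sum>j\<in>UNIV. A $ s $ j * y $ j)"
  by (simp add: matrix_vector_mult_def)

lemma Vth_Vm: "Vth Phi th $ s = Vm Phi th s"
  by (simp add: Vth_def Vm_def)

lemma PiM_Phi: "(PiM mu *v (Phi *v x)) $ s = (\<Sum>a\<in>UNIV. mu s a * (Phi $ (s,a) \<bullet> x))"
proof -
  have "(PiM mu *v (Phi *v x)) $ s = (\<Sum>j\<in>UNIV. (if fst j = s then mu s (snd j) else 0) * (Phi $ j \<bullet> x))"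
    apply (simp only: mv_comp[of "PiM mu"])
    apply (simp add: PiM_def matrix_vector_mul_component)
    done
  also have "\<dots> = (\<Sum>s'\<in>UNIV. \<Sum>a\<in>UNIV. (if fst (s',a) = s then mu s (snd (s',a)) else 0) * (Phi $ (s',a) \<bullet> x))"
    by (rule sum_UNIV_pair)
  also have "\<dots> = (\<Sum>s'\<in>UNIV. if s' = s then (\<Sum>a\<in>UNIV. mu s a * (Phi $ (s',a) \<bullet> x)) else 0)"
    by (rule sum.cong) (simp_all add: if_distrib[of "\<lambda>z. z * _"] cong: if_cong)
  also have "\<dots> = (\<Sum>a\<in>UNIV. mu s a * (Phi $ (s,a) \<bullet> x))"
    by (rule trans[OF sum.delta[OF finite_class.finite_UNIV]]) simp
  finally show ?thesis .
qed

lemma PiM_Gpol: "PiM (Gpol Phi ts th) *v (Phi *v (th - ts)) = Vth Phi th - Vth Phi ts"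
proof -
  have "(PiM (Gpol Phi ts th) *v (Phi *v (th - ts))) $ s = (Vth Phi th - Vth Phi ts) $ s" for s
  proof -
    have "(PiM (Gpol Phi ts th) *v (Phi *v (th - ts))) $ s = (\<Sum>a\<in>UNIV. Gpol Phi ts th s a * (Phi $ (s,a) \<bullet> (th - ts)))"
      by (rule PiM_Phi)
    also have "\<dots> = Vm Phi th s - Vm Phi ts s" by (rule Gpol_props(2))
    also have "\<dots> = (Vth Phi th - Vth Phi ts) $ s" by (simp only: vector_minus_component Vth_Vm)
    finally show ?thesis .
  qed
  then show ?thesis by (simp add: vec_eq_iff)
qed


lemma cnt_meas: "(g :: 'a \<Rightarrow> 'b) \<in> measurable N (count_space UNIV) \<Longrightarrow> (\<lambda>x. h (g x) :: 'c::topological_space) \<in> borel_measurable N"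
  by (rule measurable_compose[where f=g]) auto

lemma cnt_meas2: "(g :: 'a \<Rightarrow> 'b) \<in> measurable N (count_space UNIV) \<Longrightarrow> (\<lambda>x. h (g x) :: 'c) \<in> measurable N (count_space UNIV)"
  by (rule measurable_compose[where f=g]) auto

lemma Max_meas:
  fixes Phi :: "real^'d::finite^('s::finite\<times>'u::finite)"
  assumes th: "th \<in> borel_measurable N" and g: "g \<in> measurable N (count_space UNIV)"
  shows "(\<lambda>\<omega>. Max (range (\<lambda>u. Phi $ (g \<omega>, u) \<bullet> th \<omega>))) \<in> borel_measurable N"
proof (rule measurable_compose_countable'[where f="\<lambda>i \<omega>. Max (range (\<lambda>u. Phi $ (i, u) \<bullet> th \<omega>))" and g=g and I=UNIV])
  fix i :: 's
  show "(\<lambda>\<omega>. Max (range (\<lambda>u. Phi $ (i, u) \<bullet> th \<omega>))) \<in> borel_measurable N"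
    by (rule borel_measurable_Max) (auto intro: borel_measurable_inner th)
qed (auto simp: g)

lemma theta_meas:
  assumes X: "\<And>i. i \<le> n \<Longrightarrow> X i \<in> measurable N (count_space UNIV)"
    and rw: "\<And>i. 1 \<le> i \<Longrightarrow> i \<le> n \<Longrightarrow> rw i \<in> borel_measurable N"
  shows "theta_it \<alpha> \<gamma> Phi th0 X rw n \<in> borel_measurable N"
  using assms
proof (induction n)
  case 0
  then show ?case by simp
next
  case (Suc n)
  have th: "theta_it \<alpha> \<gamma> Phi th0 X rw n \<in> borel_measurable N"
    using Suc by auto
  have Xn: "X n \<in> measurable N (count_space UNIV)" using Suc by auto
  have Xs: "(\<lambda>\<omega>. fst (X (Suc n) \<omega>)) \<in> measurable N (count_space UNIV)"
    using Suc(2)[of "Suc n"] by (auto intro: cnt_meas2)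
  have rs: "rw (Suc n) \<in> borel_measurable N" using Suc by auto
  have ph: "(\<lambda>\<omega>. Phi $ X n \<omega>) \<in> borel_measurable N" by (rule cnt_meas[OF Xn])
  have mx: "(\<lambda>\<omega>. Max (range (\<lambda>u. Phi $ (fst (X (Suc n) \<omega>), u) \<bullet> theta_it \<alpha> \<gamma> Phi th0 X rw n \<omega>))) \<in> borel_measurable N"
    by (rule Max_meas[OF th Xs])
  show ?case
    unfolding theta_it.simps Let_def
    by (intro borel_measurable_add borel_measurable_scaleR borel_measurable_times borel_measurable_diff
        borel_measurable_inner th rs ph mx borel_measurable_const)
qed



lemma filt_gen_subset: "({X i -` A \<inter> space M | i A. i \<le> k} \<union>
      {rw i -` (B::real set) \<inter> space M | i B. 1 \<le> i \<and> i \<le> k \<and> B \<in> sets borel}) \<subseteq> Pow (space M)"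
  by auto

lemma filt_space: "space (filt M X rw k) = space M"
  unfolding filt_def by (simp add: space_measure_of_conv)

lemma filt_sets: "sets (filt M X rw k) = sigma_sets (space M) ({X i -` A \<inter> space M | i A. i \<le> k} \<union>
      {rw i -` (B::real set) \<inter> space M | i B. 1 \<le> i \<and> i \<le> k \<and> B \<in> sets borel})"
  unfolding filt_def by (rule sets_measure_of[OF filt_gen_subset])

lemma filt_subalg:
  assumes X_meas: "\<forall>k. X k \<in> measurable M (count_space UNIV)"
    and rw_meas: "\<forall>k. rw k \<in> borel_measurable M"
  shows "subalgebra M (filt M X rw k)"
  unfolding subalgebra_def
proof
  show "space (filt M X rw k) = space M" by (rule filt_space)
  show "sets (filt M X rw k) \<subseteq> sets M"
    unfolding filt_sets
  proof (rule sets.sigma_sets_subset)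
    show "{X i -` A \<inter> space M | i A. i \<le> k} \<union>
      {rw i -` (B::real set) \<inter> space M | i B. 1 \<le> i \<and> i \<le> k \<and> B \<in> sets borel} \<subseteq> sets M"
    proof safe
      fix i A show "X i -` A \<inter> space M \<in> sets M"
        using measurable_sets[of "X i" M "count_space UNIV" A] X_meas by auto
    next
      fix i and B :: "real set" assume "B \<in> sets borel"
      then show "rw i -` B \<inter> space M \<in> sets M"
        using measurable_sets[of "rw i" M borel B] rw_meas by auto
    qed
  qed
qed

lemma filt_X: "i \<le> k \<Longrightarrow> X i \<in> measurable (filt M X rw k) (count_space UNIV)"
  unfolding measurable_def filt_space filt_sets
  by (auto intro!: sigma_sets.Basic)

lemma filt_rw: "1 \<le> i \<Longrightarrow> i \<le> k \<Longrightarrow> rw i \<in> borel_measurable (filt M X rw k)"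
  unfolding measurable_def filt_space filt_sets
  by (auto intro!: sigma_sets.Basic)



lemma Vm_meas: "th \<in> borel_measurable N \<Longrightarrow> (\<lambda>\<omega>. Vm Phi (th \<omega>) s) \<in> borel_measurable N"
  unfolding Vm_def by (rule borel_measurable_Max) (auto intro: borel_measurable_inner)

lemma Ind_meas: "th \<in> borel_measurable N \<Longrightarrow> (\<lambda>\<omega>. Ind Phi (th \<omega>) s a) \<in> borel_measurable N"
  unfolding Ind_def
  by (intro measurable_If borel_measurable_const pred_intros_logic borel_measurable_eq
        borel_measurable_inner Vm_meas) auto

lemma mu1_meas: "th \<in> borel_measurable N \<Longrightarrow> (\<lambda>\<omega>. mu1 Phi (th \<omega>) s a) \<in> borel_measurable N"
  unfolding mu1_def
  by (intro borel_measurable_divide borel_measurable_sum Ind_meas)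

lemma Gpol_meas: "th \<in> borel_measurable N \<Longrightarrow> (\<lambda>\<omega>. Gpol Phi ts (th \<omega>) s a) \<in> borel_measurable N"
  unfolding Gpol_def Let_def
  by (intro measurable_If borel_measurable_const pred_intros_logic borel_measurable_eq
        borel_measurable_inner Vm_meas borel_measurable_add borel_measurable_times borel_measurable_diff
        borel_measurable_divide borel_measurable_sum mu1_meas borel_measurable_inner) auto



lemma outerE_mv: "outerE i *v v = (\<chi> j. if j = i then v $ i else 0)"
proof -
  have "(\<Sum>ja\<in>UNIV. (if j = i \<and> ja = i then 1 else 0) * v $ ja) = (if j = i then v $ i else 0)" for j
  proof (cases "j = i")
    case True
    have "(\<Sum>ja\<in>UNIV. (if j = i \<and> ja = i then 1 else 0) * v $ ja) = (\<Sum>ja\<in>UNIV. if ja = i then v $ ja else 0)"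
      by (rule sum.cong) (auto simp: True)
    also have "\<dots> = v $ i" by simp
    finally show ?thesis using True by simp
  qed simp
  then show ?thesis by (simp add: vec_eq_iff matrix_vector_mult_def outerE_def)
qed


lemma outer_lemma: "transpose Phi *v (outerE i *v v) = (v $ i) *\<^sub>R (Phi $ i)"
proof -
  have "(transpose Phi *v (outerE i *v v)) $ k = (v $ i) * (Phi $ i $ k)" for k
  proof -
    have "(transpose Phi *v (outerE i *v v)) $ k = (\<Sum>j\<in>UNIV. Phi $ j $ k * (if j = i then v $ i else 0))"
      unfolding mv_comp[of "transpose Phi"] by (simp add: outerE_mv transpose_def)
    also have "\<dots> = (\<Sum>j\<in>UNIV. if j = i then v $ i * Phi $ j $ k else 0)"
      by (rule sum.cong) auto
    also have "\<dots> = (v $ i) * (Phi $ i $ k)"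
      by (rule trans[OF sum.delta[OF finite_class.finite_UNIV]]) simp
    finally show ?thesis .
  qed
  then show ?thesis by (simp add: vec_eq_iff)
qed

lemma amu_mv: "Amu \<alpha> \<gamma> Phi d P mu *v y = y - \<alpha> *\<^sub>R (transpose Phi *v (diagM d *v (Phi *v y)))
   + (\<alpha> * \<gamma>) *\<^sub>R (transpose Phi *v (diagM d *v (P *v (PiM mu *v (Phi *v y)))))"
  unfolding Amu_def
  by (simp add: matrix_vector_mult_add_rdistrib matrix_vector_mult_diff_rdistrib
      scaleR_matrix_vector_assoc[symmetric] matrix_vector_mul_assoc matrix_mul_assoc)

lemma vec_id:
  fixes th ts ph u1 u2 :: "'a::real_vector"
  shows "th + (\<alpha> * c) *\<^sub>R ph - ts = ((th - ts) - \<alpha> *\<^sub>R u1 + (\<alpha>*\<gamma>) *\<^sub>R u2)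
     + \<alpha> *\<^sub>R (dx *\<^sub>R ph - (\<gamma> *\<^sub>R u2 - u1)) + \<alpha> *\<^sub>R ((c - dx) *\<^sub>R ph)"
  by (simp add: algebra_simps)

lemma recur_alg:
  fixes Phi :: "real^'d::finite^('s::finite\<times>'u::finite)"
  assumes fp: "transpose Phi *v (diagM d *v deltaB R P \<gamma> Phi ts) = 0"
    and pm: "PiM mu *v (Phi *v (th - ts)) = Vth Phi th - Vth Phi ts"
  shows "th + (\<alpha> * (rr + \<gamma> * M1 - Phi $ x \<bullet> th)) *\<^sub>R Phi $ x - ts
     = Amu \<alpha> \<gamma> Phi d P mu *v (th - ts)
       + \<alpha> *\<^sub>R (transpose Phi *v ((outerE x - diagM d) *v deltaB R P \<gamma> Phi th))
       + \<alpha> *\<^sub>R ((rr + \<gamma> * M1 - Phi $ x \<bullet> th - deltaB R P \<gamma> Phi th $ x) *\<^sub>R Phi $ x)"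
    and "transpose Phi *v ((outerE x - diagM d) *v deltaB R P \<gamma> Phi th)
       = transpose Phi *v ((outerE x - diagM d) *v
              (R + \<gamma> *\<^sub>R (P *v Vth Phi ts) - Phi *v ts
               + (\<gamma> *\<^sub>R (P ** PiM mu) - mat 1) *v (Phi *v (th - ts))))"
proof -
  define y where "y = th - ts"
  define E where "E = Vth Phi th - Vth Phi ts"
  have dd: "deltaB R P \<gamma> Phi th = deltaB R P \<gamma> Phi ts + (\<gamma> *\<^sub>R (P *v E) - Phi *v y)"
    unfolding deltaB_def E_def y_def by (simp add: algebra_simps)
  have pm': "PiM mu *v (Phi *v y) = E" using pm unfolding y_def E_def .
  have dd2: "deltaB R P \<gamma> Phi th = R + \<gamma> *\<^sub>R (P *v Vth Phi ts) - Phi *v ts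
               + (\<gamma> *\<^sub>R (P ** PiM mu) - mat 1) *v (Phi *v (th - ts))"
    unfolding dd y_def[symmetric] 
    by (simp add: deltaB_def matrix_vector_mult_diff_rdistrib scaleR_matrix_vector_assoc[symmetric]
        matrix_vector_mul_assoc[symmetric] pm')
  then show "transpose Phi *v ((outerE x - diagM d) *v deltaB R P \<gamma> Phi th)
       = transpose Phi *v ((outerE x - diagM d) *v
              (R + \<gamma> *\<^sub>R (P *v Vth Phi ts) - Phi *v ts
               + (\<gamma> *\<^sub>R (P ** PiM mu) - mat 1) *v (Phi *v (th - ts))))" by simp
  define dl where "dl = deltaB R P \<gamma> Phi th"
  define u1 where "u1 = transpose Phi *v (diagM d *v (Phi *v y))"
  define u2 where "u2 = transpose Phi *v (diagM d *v (P *v E))"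
  have b: "transpose Phi *v ((outerE x - diagM d) *v dl) = (dl $ x) *\<^sub>R Phi $ x - (\<gamma> *\<^sub>R u2 - u1)"
  proof -
    have "transpose Phi *v (diagM d *v dl) = transpose Phi *v (diagM d *v (dl - deltaB R P \<gamma> Phi ts))"
      using fp by (simp add: matrix_vector_mult_diff_distrib)
    also have "\<dots> = \<gamma> *\<^sub>R u2 - u1"
      unfolding dl_def dd u1_def u2_def by (simp add: matrix_vector_mult_diff_distrib matrix_vector_mult_scaleR)
    finally have *: "transpose Phi *v (diagM d *v dl) = \<gamma> *\<^sub>R u2 - u1" .
    have "transpose Phi *v ((outerE x - diagM d) *v dl) = transpose Phi *v (outerE x *v dl) - transpose Phi *v (diagM d *v dl)"
      by (simp only: matrix_vector_mult_diff_rdistrib matrix_vector_mult_diff_distrib)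
    then show ?thesis unfolding * outer_lemma .
  qed
  have a: "Amu \<alpha> \<gamma> Phi d P mu *v y = y - \<alpha> *\<^sub>R u1 + (\<alpha> * \<gamma>) *\<^sub>R u2"
    unfolding amu_mv pm' u1_def u2_def ..
  show "th + (\<alpha> * (rr + \<gamma> * M1 - Phi $ x \<bullet> th)) *\<^sub>R Phi $ x - ts
     = Amu \<alpha> \<gamma> Phi d P mu *v (th - ts)
       + \<alpha> *\<^sub>R (transpose Phi *v ((outerE x - diagM d) *v deltaB R P \<gamma> Phi th))
       + \<alpha> *\<^sub>R ((rr + \<gamma> * M1 - Phi $ x \<bullet> th - deltaB R P \<gamma> Phi th $ x) *\<^sub>R Phi $ x)"
    apply (unfold y_def[symmetric] dl_def[symmetric] a b)
    apply (unfold y_def)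
    by (rule vec_id)
qed



lemma abs_le_sumU: "\<bar>f x\<bar> \<le> (\<Sum>y\<in>(UNIV::'a::finite set). \<bar>f y :: real\<bar>)"
  by (rule member_le_sum) auto

lemma norm_le_sumU: "norm (f x) \<le> (\<Sum>y\<in>(UNIV::'a::finite set). norm (f y :: 'b::real_normed_vector))"
  by (rule member_le_sum) auto

lemma r_bound: "\<bar>r s a s'\<bar> \<le> (\<Sum>s\<in>(UNIV::'s::finite set). \<Sum>a\<in>(UNIV::'u::finite set). \<Sum>s'\<in>(UNIV::'t::finite set). \<bar>r s a s' :: real\<bar>)"
proof -
  have "\<bar>r s a s'\<bar> \<le> (\<Sum>s'\<in>UNIV. \<bar>r s a s'\<bar>)" by (rule abs_le_sumU)
  also have "\<dots> \<le> (\<Sum>a\<in>UNIV. \<Sum>s'\<in>UNIV. \<bar>r s a s'\<bar>)"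
    by (rule member_le_sum[where f="\<lambda>a. \<Sum>s'\<in>UNIV. \<bar>r s a s'\<bar>"]) (auto intro: sum_nonneg)
  also have "\<dots> \<le> (\<Sum>s\<in>UNIV. \<Sum>a\<in>UNIV. \<Sum>s'\<in>UNIV. \<bar>r s a s'\<bar>)"
    by (rule member_le_sum[where f="\<lambda>s. \<Sum>a\<in>UNIV. \<Sum>s'\<in>UNIV. \<bar>r s a s'\<bar>"]) (auto intro: sum_nonneg)
  finally show ?thesis .
qed

lemma Vm_bound:
  fixes Phi :: "real^'d::finite^('s::finite\<times>'u::finite)"
  shows "\<bar>Vm Phi th s\<bar> \<le> (\<Sum>j\<in>UNIV. norm (Phi $ j)) * norm th"
proof -
  obtain a where a: "Phi $ (s,a) \<bullet> th = Vm Phi th s" using Vm_ex by blast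
  have "\<bar>Phi $ (s,a) \<bullet> th\<bar> \<le> norm (Phi $ (s,a)) * norm th" by (rule Cauchy_Schwarz_ineq2)
  also have "\<dots> \<le> (\<Sum>j\<in>UNIV. norm (Phi $ j)) * norm th"
    by (rule mult_right_mono[OF norm_le_sumU]) simp
  finally show ?thesis using a by simp
qed

lemma theta_bound:
  fixes Phi :: "real^'d::finite^('s::finite\<times>'u::finite)"
  assumes rw_def: "\<forall>k. \<forall>\<omega>\<in>space M. rw (Suc k) \<omega> = r (fst (X k \<omega>)) (snd (X k \<omega>)) (fst (X (Suc k) \<omega>))"
  shows "\<exists>B\<ge>0. \<forall>\<omega>\<in>space M. norm (theta_it \<alpha> \<gamma> Phi th0 X rw n \<omega>) \<le> B"
proof (induction n)
  case 0
  show ?case by (intro exI[of _ "norm th0"]) simp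
next
  case (Suc n)
  then obtain B where B0: "B \<ge> 0" and B: "\<forall>\<omega>\<in>space M. norm (theta_it \<alpha> \<gamma> Phi th0 X rw n \<omega>) \<le> B" by blast
  define C where "C = (\<Sum>j\<in>UNIV. norm (Phi $ j))"
  define Rm where "Rm = (\<Sum>s\<in>(UNIV::'s set). \<Sum>a\<in>(UNIV::'u set). \<Sum>s'\<in>(UNIV::'s set). \<bar>r s a s'\<bar>)"
  have C0: "C \<ge> 0" unfolding C_def by (auto intro: sum_nonneg)
  have rowC: "norm (Phi $ j) \<le> C" for j unfolding C_def by (rule norm_le_sumU)
  show ?case
  proof (intro exI[of _ "B + \<bar>\<alpha>\<bar> * (Rm + \<bar>\<gamma>\<bar> * (C * B) + C * B) * C"] conjI ballI)
    show "0 \<le> B + \<bar>\<alpha>\<bar> * (Rm + \<bar>\<gamma>\<bar> * (C * B) + C * B) * C"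
      using B0 C0 by (auto intro!: add_nonneg_nonneg mult_nonneg_nonneg simp: Rm_def intro: sum_nonneg)
    fix \<omega> assume w: "\<omega> \<in> space M"
    define th where "th = theta_it \<alpha> \<gamma> Phi th0 X rw n \<omega>"
    define x where "x = X n \<omega>"
    define s1 where "s1 = fst (X (Suc n) \<omega>)"
    have thB: "norm th \<le> B" using B w unfolding th_def by auto
    have rr: "\<bar>rw (Suc n) \<omega>\<bar> \<le> Rm" using rw_def w r_bound unfolding Rm_def by metis
    have mx: "\<bar>Max (range (\<lambda>u. Phi $ (s1, u) \<bullet> th))\<bar> \<le> C * B"
      using Vm_bound[of Phi th s1] mult_left_mono[OF thB C0] unfolding Vm_def C_def by linarith
    have ph: "\<bar>Phi $ x \<bullet> th\<bar> \<le> C * B"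
      using Cauchy_Schwarz_ineq2[of "Phi $ x" th] mult_mono[OF rowC[of x] thB] C0 by auto
    have c: "\<bar>rw (Suc n) \<omega> + \<gamma> * Max (range (\<lambda>u. Phi $ (s1, u) \<bullet> th)) - Phi $ x \<bullet> th\<bar> \<le> Rm + \<bar>\<gamma>\<bar> * (C * B) + C * B"
    proof -
      have "\<bar>\<gamma> * Max (range (\<lambda>u. Phi $ (s1, u) \<bullet> th))\<bar> \<le> \<bar>\<gamma>\<bar> * (C * B)"
        unfolding abs_mult by (rule mult_left_mono[OF mx]) simp
      then show ?thesis using rr ph by linarith
    qed
    have "norm (th + (\<alpha> * (rw (Suc n) \<omega> + \<gamma> * Max (range (\<lambda>u. Phi $ (s1, u) \<bullet> th)) - Phi $ x \<bullet> th)) *\<^sub>R Phi $ x)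
       \<le> norm th + \<bar>\<alpha>\<bar> * \<bar>rw (Suc n) \<omega> + \<gamma> * Max (range (\<lambda>u. Phi $ (s1, u) \<bullet> th)) - Phi $ x \<bullet> th\<bar> * norm (Phi $ x)"
      by (rule order_trans[OF norm_triangle_ineq]) (simp add: abs_mult)
    also have "\<dots> \<le> B + \<bar>\<alpha>\<bar> * (Rm + \<bar>\<gamma>\<bar> * (C * B) + C * B) * C"
    proof -
      have Rm0: "Rm \<ge> 0" unfolding Rm_def by (auto intro: sum_nonneg)
      have K0: "0 \<le> Rm + \<bar>\<gamma>\<bar> * (C * B) + C * B" using Rm0 C0 B0 by simp
      show ?thesis
        by (intro add_mono thB mult_mono mult_left_mono c rowC) (auto simp: C0 K0)
    qed
    finally show "norm (theta_it \<alpha> \<gamma> Phi th0 X rw (Suc n) \<omega>) \<le> B + \<bar>\<alpha>\<bar> * (Rm + \<bar>\<gamma>\<bar> * (C * B) + C * B) * C"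
      by (simp add: th_def x_def s1_def Let_def)
  qed
qed





lemma xi_decomp:
  fixes Phi :: "real^'d::finite^('s::finite\<times>'u::finite)" and P :: "real^'s^('s\<times>'u)"
  shows "((r (fst x) (snd x) s1 + \<gamma> * Max (range (\<lambda>u. Phi $ (s1,u) \<bullet> th)) - Phi $ x \<bullet> th
            - deltaB (Rvec P r) P \<gamma> Phi th $ x) *\<^sub>R Phi $ x) $ i
     = (\<Sum>s'\<in>UNIV. Phi $ x $ i * (r (fst x) (snd x) s' + \<gamma> * Vm Phi th s') * (if s1 = s' then 1 else 0)
                  - Phi $ x $ i * (r (fst x) (snd x) s' + \<gamma> * Vm Phi th s') * P $ x $ s')"
proof -
  define H where "H s' = Phi $ x $ i * (r (fst x) (snd x) s' + \<gamma> * Vm Phi th s')" for s'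
  have d: "deltaB (Rvec P r) P \<gamma> Phi th $ x
      = (\<Sum>s'\<in>UNIV. P $ x $ s' * (r (fst x) (snd x) s' + \<gamma> * Vm Phi th s')) - Phi $ x \<bullet> th"
  proof -
    have "deltaB (Rvec P r) P \<gamma> Phi th $ x = Rvec P r $ x + \<gamma> * (P *v Vth Phi th) $ x - (Phi *v th) $ x"
      unfolding deltaB_def by simp
    also have "\<dots> = (\<Sum>s'\<in>UNIV. P $ x $ s' * r (fst x) (snd x) s') + \<gamma> * (\<Sum>s'\<in>UNIV. P $ x $ s' * Vm Phi th s') - Phi $ x \<bullet> th"
      unfolding mv_comp[of P] Vth_Vm unfolding matrix_vector_mul_component by (simp add: Rvec_def)
    also have "\<dots> = (\<Sum>s'\<in>UNIV. P $ x $ s' * (r (fst x) (snd x) s' + \<gamma> * Vm Phi th s')) - Phi $ x \<bullet> th"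
      by (simp add: sum.distrib sum_distrib_left distrib_left mult.left_commute)
    finally show ?thesis .
  qed
  have "(\<Sum>s'\<in>UNIV. H s' * (if s1 = s' then 1 else 0) - H s' * P $ x $ s')
      = (\<Sum>s'\<in>UNIV. H s' * (if s1 = s' then 1 else 0)) - (\<Sum>s'\<in>UNIV. H s' * P $ x $ s')"
    by (rule sum_subtractf)
  also have "(\<Sum>s'\<in>UNIV. H s' * (if s1 = s' then 1 else 0)) = H s1"
  proof -
    have "(\<Sum>s'\<in>UNIV. H s' * (if s1 = s' then 1 else 0)) = (\<Sum>s'\<in>UNIV. if s1 = s' then H s' else 0)"
      by (rule sum.cong) auto
    also have "\<dots> = H s1" by (rule trans[OF sum.delta'[OF finite_class.finite_UNIV]]) simp
    finally show ?thesis .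
  qed
  also have "(\<Sum>s'\<in>UNIV. H s' * P $ x $ s') = Phi $ x $ i * (\<Sum>s'\<in>UNIV. P $ x $ s' * (r (fst x) (snd x) s' + \<gamma> * Vm Phi th s'))"
    unfolding H_def sum_distrib_left by (rule sum.cong) auto
  finally have R: "(\<Sum>s'\<in>UNIV. H s' * (if s1 = s' then 1 else 0) - H s' * P $ x $ s')
     = H s1 - Phi $ x $ i * (\<Sum>s'\<in>UNIV. P $ x $ s' * (r (fst x) (snd x) s' + \<gamma> * Vm Phi th s'))" .
  have mx: "Max (range (\<lambda>u. Phi $ (s1,u) \<bullet> th)) = Vm Phi th s1" by (simp add: Vm_def)
  show ?thesis
    unfolding H_def[symmetric] R unfolding H_def d mx
    by (simp add: algebra_simps)
qed



theorem proposition3: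
  fixes M :: "'w measure"
    and P :: "real^'s::finite^('s \<times> 'u::finite)"
    and r :: "'s \<Rightarrow> 'u \<Rightarrow> 's \<Rightarrow> real"
    and \<gamma> \<alpha> :: real
    and Phi :: "real^'d::finite^('s \<times> 'u)"
    and beh :: "'s \<Rightarrow> 'u \<Rightarrow> real"
    and d :: "real^('s \<times> 'u)"
    and X :: "nat \<Rightarrow> 'w \<Rightarrow> 's \<times> 'u"
    and rw :: "nat \<Rightarrow> 'w \<Rightarrow> real"
    and th0 thstar :: "real^'d"
  assumes prob: "prob_space M"
    and P_nonneg: "\<forall>i s'. 0 \<le> P $ i $ s'"
    and P_stoch: "\<forall>i. (\<Sum>s'\<in>UNIV. P $ i $ s') = 1"
    and gamma: "0 < \<gamma>" "\<gamma> < 1"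
    and alpha: "0 < \<alpha>" "\<alpha> < 1"
    and Phi_rank: "rank Phi = CARD('d)"
    and beh_stoch: "stoch_policy beh"
    and X_meas: "\<forall>k. X k \<in> measurable M (count_space UNIV)"
    and rw_meas: "\<forall>k. rw k \<in> borel_measurable M"
    and rw_def: "\<forall>k. \<forall>\<omega>\<in>space M. rw (Suc k) \<omega> = r (fst (X k \<omega>)) (snd (X k \<omega>)) (fst (X (Suc k) \<omega>))"
    and trans_law: "\<forall>k s'. AE \<omega> in M.
        real_cond_exp M (filt M X rw k) (indicator {\<omega>\<in>space M. fst (X (Suc k) \<omega>) = s'}) \<omega>
          = P $ X k \<omega> $ s'"
    and act_law: "\<forall>k a'. AE \<omega> in M.
        real_cond_exp M (filt_next M X rw k) (indicator {\<omega>\<in>space M. snd (X (Suc k) \<omega>) = a'}) \<omega>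
          = beh (fst (X (Suc k) \<omega>)) a'"
    and d_pos: "\<forall>i. 0 < d $ i"
    and d_sum: "(\<Sum>i\<in>UNIV. d $ i) = 1"
    and d_stat: "\<forall>s' a'. (\<Sum>(s,a)\<in>UNIV. d $ (s,a) * P $ (s,a) $ s' * beh s' a') = d $ (s',a')"
    and rho: "rho_dir \<alpha> \<gamma> Phi d P < 1"
    and fixpt: "gB (Rvec P r) P \<gamma> Phi d thstar = 0"
  shows "\<exists>mu :: nat \<Rightarrow> 'w \<Rightarrow> 's \<Rightarrow> 'u \<Rightarrow> real.
     (\<forall>k s a. (\<lambda>\<omega>. mu k \<omega> s a) \<in> borel_measurable (filt M X rw k)) \<and>
     (\<forall>k. \<forall>\<omega>\<in>space M. stoch_policy (mu k \<omega>)) \<and>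
     (\<forall>k. \<forall>\<omega>\<in>space M.
        theta_it \<alpha> \<gamma> Phi th0 X rw (Suc k) \<omega> - thstar
          = Amu \<alpha> \<gamma> Phi d P (mu k \<omega>) *v (theta_it \<alpha> \<gamma> Phi th0 X rw k \<omega> - thstar)
            + \<alpha> *\<^sub>R b_bias (Rvec P r) P \<alpha> \<gamma> Phi d th0 X rw k \<omega>
            + \<alpha> *\<^sub>R xi_noise (Rvec P r) P \<alpha> \<gamma> Phi th0 X rw k \<omega>) \<and>
     (\<forall>k i. AE \<omega> in M.
        real_cond_exp M (filt M X rw k) (\<lambda>\<omega>. xi_noise (Rvec P r) P \<alpha> \<gamma> Phi th0 X rw k \<omega> $ i) \<omega> = 0) \<and>
     (\<forall>k. \<forall>\<omega>\<in>space M.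
        b_bias (Rvec P r) P \<alpha> \<gamma> Phi d th0 X rw k \<omega>
          = transpose Phi *v ((outerE (X k \<omega>) - diagM d) *v
              (Rvec P r + \<gamma> *\<^sub>R (P *v Vth Phi thstar) - Phi *v thstar
               + (\<gamma> *\<^sub>R (P ** PiM (mu k \<omega>)) - mat 1) *v (Phi *v (theta_it \<alpha> \<gamma> Phi th0 X rw k \<omega> - thstar)))))"
proof -
  interpret prob_space M by (rule prob)
  define th where "th k \<omega> = theta_it \<alpha> \<gamma> Phi th0 X rw k \<omega>" for k \<omega>
  define mu where "mu k \<omega> = Gpol Phi thstar (th k \<omega>)" for k \<omega>
  have subalg: "subalgebra M (filt M X rw k)" for k by (rule filt_subalg[OF X_meas rw_meas])
  have thF: "th k \<in> borel_measurable (filt M X rw k)" for k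
  proof -
    have "theta_it \<alpha> \<gamma> Phi th0 X rw k \<in> borel_measurable (filt M X rw k)"
      by (rule theta_meas) (auto intro: filt_X filt_rw)
    then show ?thesis unfolding th_def by simp
  qed
  have fp: "transpose Phi *v (diagM d *v deltaB (Rvec P r) P \<gamma> Phi thstar) = 0"
    using fixpt unfolding gB_def .
  have CE: "AE \<omega> in M.
        real_cond_exp M (filt M X rw k) (\<lambda>\<omega>. xi_noise (Rvec P r) P \<alpha> \<gamma> Phi th0 X rw k \<omega> $ i) \<omega> = 0"
    for k i
  proof -
    have fm: "finite_measure M" using prob unfolding prob_space_def by simp
    interpret F: finite_measure_subalgebra M "filt M X rw k"
      by (rule finite_measure_subalgebra.intro[OF fm]) (rule finite_measure_subalgebra_axioms.intro[OF subalg])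
    define H where "H s' \<omega> = Phi $ X k \<omega> $ i * (r (fst (X k \<omega>)) (snd (X k \<omega>)) s' + \<gamma> * Vm Phi (th k \<omega>) s')" for s' \<omega>
    define Id where "Id s' = (indicator {\<omega>\<in>space M. fst (X (Suc k) \<omega>) = s'} :: 'w \<Rightarrow> real)" for s'
    define Q where "Q s' \<omega> = P $ X k \<omega> $ s'" for s' \<omega>
    define G where "G s' \<omega> = H s' \<omega> * Id s' \<omega> - H s' \<omega> * Q s' \<omega>" for s' \<omega>
    have XkF: "X k \<in> measurable (filt M X rw k) (count_space UNIV)" by (rule filt_X) simp
    have HF: "H s' \<in> borel_measurable (filt M X rw k)" for s'
    proof -
      have a1: "(\<lambda>\<omega>. Phi $ X k \<omega> $ i) \<in> borel_measurable (filt M X rw k)" by (rule cnt_meas[OF XkF])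
      have a2: "(\<lambda>\<omega>. r (fst (X k \<omega>)) (snd (X k \<omega>)) s') \<in> borel_measurable (filt M X rw k)" by (rule cnt_meas[OF XkF])
      have a3: "(\<lambda>\<omega>. Vm Phi (th k \<omega>) s') \<in> borel_measurable (filt M X rw k)" by (rule Vm_meas[OF thF])
      show ?thesis unfolding H_def
        by (intro borel_measurable_times borel_measurable_add borel_measurable_const a1 a2 a3)
    qed
    have QF: "Q s' \<in> borel_measurable (filt M X rw k)" for s'
      unfolding Q_def by (rule cnt_meas[OF XkF])
    have HM: "H s' \<in> borel_measurable M" for s' by (rule measurable_from_subalg[OF subalg HF])
    have QM: "Q s' \<in> borel_measurable M" for s' by (rule measurable_from_subalg[OF subalg QF])
    have IdM: "Id s' \<in> borel_measurable M" for s'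
    proof -
      have m: "(\<lambda>\<omega>. fst (X (Suc k) \<omega>)) \<in> measurable M (count_space UNIV)"
        by (rule cnt_meas2) (use X_meas in auto)
      have "(\<lambda>\<omega>. fst (X (Suc k) \<omega>)) -` {s'} \<inter> space M \<in> sets M"
        by (rule measurable_sets[OF m]) simp
      moreover have "(\<lambda>\<omega>. fst (X (Suc k) \<omega>)) -` {s'} \<inter> space M = {\<omega>\<in>space M. fst (X (Suc k) \<omega>) = s'}"
        by auto
      ultimately show ?thesis unfolding Id_def by (intro borel_measurable_indicator) simp
    qed
    obtain B where B0: "B \<ge> 0" and B: "\<forall>\<omega>\<in>space M. norm (th k \<omega>) \<le> B"
      using theta_bound[OF rw_def, of \<alpha> \<gamma> Phi th0 k] unfolding th_def by blast
    define C where "C = (\<Sum>j\<in>UNIV. norm (Phi $ j))"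
    define Rm where "Rm = (\<Sum>s\<in>(UNIV::'s set). \<Sum>a\<in>(UNIV::'u set). \<Sum>s'\<in>(UNIV::'s set). \<bar>r s a s'\<bar>)"
    define Pm where "Pm = (\<Sum>j\<in>UNIV. \<Sum>s'\<in>UNIV. \<bar>P $ j $ s'\<bar>)"
    define KH where "KH = C * (Rm + \<bar>\<gamma>\<bar> * (C * B))"
    have C0: "C \<ge> 0" unfolding C_def by (auto intro: sum_nonneg)
    have Rm0: "Rm \<ge> 0" unfolding Rm_def by (auto intro: sum_nonneg)
    have KH0: "KH \<ge> 0" unfolding KH_def using C0 Rm0 B0 by simp
    have Hb: "\<bar>H s' \<omega>\<bar> \<le> KH" if w: "\<omega> \<in> space M" for s' \<omega>
    proof -
      have p1: "\<bar>Phi $ X k \<omega> $ i\<bar> \<le> C"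
        using component_le_norm_cart[of "Phi $ X k \<omega>" i] norm_le_sumU[of "\<lambda>j. Phi $ j" "X k \<omega>"]
        unfolding C_def by linarith
      have p2: "\<bar>r (fst (X k \<omega>)) (snd (X k \<omega>)) s'\<bar> \<le> Rm" unfolding Rm_def by (rule r_bound)
      have p3: "\<bar>Vm Phi (th k \<omega>) s'\<bar> \<le> C * B"
        using Vm_bound[of Phi "th k \<omega>" s'] mult_left_mono[of "norm (th k \<omega>)" B C] B w C0
        unfolding C_def by auto
      have p4: "\<bar>\<gamma> * Vm Phi (th k \<omega>) s'\<bar> \<le> \<bar>\<gamma>\<bar> * (C * B)"
        unfolding abs_mult by (rule mult_left_mono[OF p3]) simp
      have p5: "\<bar>r (fst (X k \<omega>)) (snd (X k \<omega>)) s' + \<gamma> * Vm Phi (th k \<omega>) s'\<bar> \<le> Rm + \<bar>\<gamma>\<bar> * (C * B)"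
        using p2 p4 by linarith
      show ?thesis unfolding H_def KH_def abs_mult
        by (rule mult_mono[OF p1 p5 C0]) simp
    qed
    have Qb: "\<bar>Q s' \<omega>\<bar> \<le> Pm" for s' \<omega>
    proof -
      have "\<bar>P $ X k \<omega> $ s'\<bar> \<le> (\<Sum>s''\<in>UNIV. \<bar>P $ X k \<omega> $ s''\<bar>)" by (rule abs_le_sumU)
      also have "\<dots> \<le> Pm" unfolding Pm_def
        by (rule member_le_sum[where f="\<lambda>j. \<Sum>s'\<in>UNIV. \<bar>P $ j $ s'\<bar>"]) (auto intro: sum_nonneg)
      finally show ?thesis unfolding Q_def .
    qed
    have Idb: "\<bar>Id s' \<omega>\<bar> \<le> 1" for s' \<omega> unfolding Id_def by (simp add: indicator_def)
    have intHI: "integrable M (\<lambda>\<omega>. H s' \<omega> * Id s' \<omega>)" for s'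
    proof (rule integrable_const_bound[where B="KH * 1"])
      show "AE \<omega> in M. norm (H s' \<omega> * Id s' \<omega>) \<le> KH * 1"
        by (rule AE_I2) (simp only: real_norm_def abs_mult, rule mult_mono[OF Hb Idb KH0], simp_all)
      show "(\<lambda>\<omega>. H s' \<omega> * Id s' \<omega>) \<in> borel_measurable M"
        by (intro borel_measurable_times HM IdM)
    qed
    have intHQ: "integrable M (\<lambda>\<omega>. H s' \<omega> * Q s' \<omega>)" for s'
    proof (rule integrable_const_bound[where B="KH * Pm"])
      show "AE \<omega> in M. norm (H s' \<omega> * Q s' \<omega>) \<le> KH * Pm"
        by (rule AE_I2) (simp only: real_norm_def abs_mult, rule mult_mono[OF Hb Qb KH0], simp_all)
      show "(\<lambda>\<omega>. H s' \<omega> * Q s' \<omega>) \<in> borel_measurable M"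
        by (intro borel_measurable_times HM QM)
    qed
    have intG: "integrable M (G s')" for s'
      unfolding G_def by (intro Bochner_Integration.integrable_diff intHI intHQ)
    have D: "xi_noise (Rvec P r) P \<alpha> \<gamma> Phi th0 X rw k \<omega> $ i = (\<Sum>s'\<in>UNIV. G s' \<omega>)" if w: "\<omega> \<in> space M" for \<omega>
    proof -
      have "xi_noise (Rvec P r) P \<alpha> \<gamma> Phi th0 X rw k \<omega> $ i
        = ((r (fst (X k \<omega>)) (snd (X k \<omega>)) (fst (X (Suc k) \<omega>))
             + \<gamma> * Max (range (\<lambda>u. Phi $ (fst (X (Suc k) \<omega>),u) \<bullet> th k \<omega>)) - Phi $ X k \<omega> \<bullet> th k \<omega>
            - deltaB (Rvec P r) P \<gamma> Phi (th k \<omega>) $ X k \<omega>) *\<^sub>R Phi $ X k \<omega>) $ i"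
        unfolding xi_noise_def Let_def th_def using rw_def w by simp
      also have "\<dots> = (\<Sum>s'\<in>UNIV. Phi $ X k \<omega> $ i * (r (fst (X k \<omega>)) (snd (X k \<omega>)) s' + \<gamma> * Vm Phi (th k \<omega>) s') * (if fst (X (Suc k) \<omega>) = s' then 1 else 0)
                  - Phi $ X k \<omega> $ i * (r (fst (X k \<omega>)) (snd (X k \<omega>)) s' + \<gamma> * Vm Phi (th k \<omega>) s') * P $ X k \<omega> $ s')"
        by (rule xi_decomp)
      also have "\<dots> = (\<Sum>s'\<in>UNIV. G s' \<omega>)"
        unfolding G_def H_def Id_def Q_def using w by (intro sum.cong) (auto simp: indicator_def)
      finally show ?thesis .
    qed
    have sumGM: "(\<lambda>\<omega>. \<Sum>s'\<in>UNIV. G s' \<omega>) \<in> borel_measurable M"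
      unfolding G_def by (intro borel_measurable_sum borel_measurable_diff borel_measurable_times HM IdM QM)
    have xiM: "(\<lambda>\<omega>. xi_noise (Rvec P r) P \<alpha> \<gamma> Phi th0 X rw k \<omega> $ i) \<in> borel_measurable M"
      using measurable_cong[of M "\<lambda>\<omega>. xi_noise (Rvec P r) P \<alpha> \<gamma> Phi th0 X rw k \<omega> $ i" "\<lambda>\<omega>. \<Sum>s'\<in>UNIV. G s' \<omega>" borel] D sumGM
      by blast
    have AE1: "AE \<omega> in M. real_cond_exp M (filt M X rw k) (\<lambda>\<omega>. xi_noise (Rvec P r) P \<alpha> \<gamma> Phi th0 X rw k \<omega> $ i) \<omega>
        = real_cond_exp M (filt M X rw k) (\<lambda>\<omega>. \<Sum>s'\<in>UNIV. G s' \<omega>) \<omega>"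
      by (rule F.real_cond_exp_cong[OF AE_I2[OF D] xiM sumGM])
    have AE2: "AE \<omega> in M. real_cond_exp M (filt M X rw k) (\<lambda>\<omega>. \<Sum>s'\<in>UNIV. G s' \<omega>) \<omega>
        = (\<Sum>s'\<in>UNIV. real_cond_exp M (filt M X rw k) (G s') \<omega>)"
      by (rule F.real_cond_exp_sum[OF intG])
    have AE3: "AE \<omega> in M. real_cond_exp M (filt M X rw k) (G s') \<omega> = 0" for s'
    proof -
      have Geq: "G s' = (\<lambda>\<omega>. H s' \<omega> * Id s' \<omega> - H s' \<omega> * Q s' \<omega>)" by (simp add: G_def fun_eq_iff)
      have a: "AE \<omega> in M. real_cond_exp M (filt M X rw k) (G s') \<omega>
          = real_cond_exp M (filt M X rw k) (\<lambda>\<omega>. H s' \<omega> * Id s' \<omega>) \<omega> - real_cond_exp M (filt M X rw k) (\<lambda>\<omega>. H s' \<omega> * Q s' \<omega>) \<omega>"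
        unfolding Geq by (rule F.real_cond_exp_diff[OF intHI intHQ])
      have b: "AE \<omega> in M. real_cond_exp M (filt M X rw k) (\<lambda>\<omega>. H s' \<omega> * Id s' \<omega>) \<omega> = H s' \<omega> * real_cond_exp M (filt M X rw k) (Id s') \<omega>"
        by (rule F.real_cond_exp_mult[OF HF IdM intHI])
      have c: "AE \<omega> in M. real_cond_exp M (filt M X rw k) (Id s') \<omega> = Q s' \<omega>"
        using trans_law unfolding Id_def Q_def by blast
      have HQF: "(\<lambda>\<omega>. H s' \<omega> * Q s' \<omega>) \<in> borel_measurable (filt M X rw k)"
        by (intro borel_measurable_times HF QF)
      have e: "AE \<omega> in M. real_cond_exp M (filt M X rw k) (\<lambda>\<omega>. H s' \<omega> * Q s' \<omega>) \<omega> = H s' \<omega> * Q s' \<omega>"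
        by (rule F.real_cond_exp_F_meas[OF intHQ HQF])
      from a b c e show ?thesis by eventually_elim simp
    qed
    have AE4: "AE \<omega> in M. \<forall>s'\<in>UNIV. real_cond_exp M (filt M X rw k) (G s') \<omega> = 0"
      by (rule AE_finite_allI) (auto intro: AE3)
    from AE1 AE2 AE4 show ?thesis by eventually_elim simp
  qed
  show ?thesis
  proof (intro exI[of _ mu] conjI allI ballI)
    fix k s a
    show "(\<lambda>\<omega>. mu k \<omega> s a) \<in> borel_measurable (filt M X rw k)"
      unfolding mu_def by (rule Gpol_meas[OF thF])
  next
    fix k \<omega> show "stoch_policy (mu k \<omega>)" unfolding mu_def by (rule Gpol_props(1))
  next
    fix k \<omega>
    show "theta_it \<alpha> \<gamma> Phi th0 X rw (Suc k) \<omega> - thstar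
          = Amu \<alpha> \<gamma> Phi d P (mu k \<omega>) *v (theta_it \<alpha> \<gamma> Phi th0 X rw k \<omega> - thstar)
            + \<alpha> *\<^sub>R b_bias (Rvec P r) P \<alpha> \<gamma> Phi d th0 X rw k \<omega>
            + \<alpha> *\<^sub>R xi_noise (Rvec P r) P \<alpha> \<gamma> Phi th0 X rw k \<omega>"
      unfolding theta_it.simps(2) Let_def b_bias_def xi_noise_def mu_def th_def
      by (rule recur_alg(1)[OF fp PiM_Gpol])
  next
    fix k \<omega>
    show "b_bias (Rvec P r) P \<alpha> \<gamma> Phi d th0 X rw k \<omega>
          = transpose Phi *v ((outerE (X k \<omega>) - diagM d) *v
              (Rvec P r + \<gamma> *\<^sub>R (P *v Vth Phi thstar) - Phi *v thstar
               + (\<gamma> *\<^sub>R (P ** PiM (mu k \<omega>)) - mat 1) *v (Phi *v (theta_it \<alpha> \<gamma> Phi th0 X rw k \<omega> - thstar))))"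
      unfolding b_bias_def mu_def th_def
      by (rule recur_alg(2)[OF fp PiM_Gpol])
  next
    fix k i show "AE \<omega> in M.
        real_cond_exp M (filt M X rw k) (\<lambda>\<omega>. xi_noise (Rvec P r) P \<alpha> \<gamma> Phi th0 X rw k \<omega> $ i) \<omega> = 0"
      by (rule CE)
  qed
qed

end
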